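(* Let $R$ be an integral domain satisfying (R$_1$) whose integral closure $R'$ is a generalized Krull domain, and such that $P \cap R$ is a height one prime of $R$ for every height one prime $P$ of $R'$. If some maximal ideal of $R$ contains all height one primes of $R$, then $R$ is local.
   Context: "Local" means having a unique maximal ideal. A ring satisfies (R$_1$) if its localization at every height one prime is a valuation domain. A domain $A$ is a generalized Krull domain if (1) $A = \bigcap A_{\mathfrak{p}}$ over all height one primes $\mathfrak{p}$ of $A$, (2) every nonzero element lies in only finitely many height one primes, and (3) $A$ satisfies (R$_1$). *)

theory Defs
  imports "HOL-Computational_Algebra.Polynomial"
begin

text \<open>Rings are modelled as subrings of an ambient field K (the type 'k),
  which is taken to be the fraction field of the rings considered.\<close>

definition subring :: "'k::field set \<Rightarrow> bool" where
  "subring A \<longleftrightarrow> 0 \<in> A \<and> 1 \<in> A \<and> (\<forall>x\<in>A. \<forall>y\<in>A. x + y \<in> A \<and> x * y \<in> A \<and> - x \<in> A)"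

definition is_fraction_field_of :: "'k::field set \<Rightarrow> bool" where
  "is_fraction_field_of A \<longleftrightarrow> (\<forall>x. \<exists>a\<in>A. \<exists>b\<in>A. b \<noteq> 0 \<and> x = a / b)"

definition ideal_in :: "'k::field set \<Rightarrow> 'k set \<Rightarrow> bool" where
  "ideal_in A I \<longleftrightarrow> I \<subseteq> A \<and> 0 \<in> I \<and> (\<forall>x\<in>I. \<forall>y\<in>I. x + y \<in> I) \<and> (\<forall>a\<in>A. \<forall>x\<in>I. a * x \<in> I)"

definition prime_ideal_in :: "'k::field set \<Rightarrow> 'k set \<Rightarrow> bool" where
  "prime_ideal_in A P \<longleftrightarrow> ideal_in A P \<and> P \<noteq> A \<and>
     (\<forall>x\<in>A. \<forall>y\<in>A. x * y \<in> P \<longrightarrow> x \<in> P \<or> y \<in> P)"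

definition maximal_ideal_in :: "'k::field set \<Rightarrow> 'k set \<Rightarrow> bool" where
  "maximal_ideal_in A M \<longleftrightarrow> ideal_in A M \<and> M \<noteq> A \<and>
     (\<forall>J. ideal_in A J \<and> M \<subseteq> J \<longrightarrow> J = M \<or> J = A)"

definition height_one_prime :: "'k::field set \<Rightarrow> 'k set \<Rightarrow> bool" where
  "height_one_prime A P \<longleftrightarrow> prime_ideal_in A P \<and> P \<noteq> {0} \<and>
     (\<forall>Q. prime_ideal_in A Q \<and> Q \<subseteq> P \<longrightarrow> Q = {0} \<or> Q = P)"

definition is_local :: "'k::field set \<Rightarrow> bool" where
  "is_local A \<longleftrightarrow> (\<exists>!M. maximal_ideal_in A M)"

definition localization :: "'k::field set \<Rightarrow> 'k set \<Rightarrow> 'k set" where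
  "localization A P = {a / s | a s. a \<in> A \<and> s \<in> A \<and> s \<notin> P}"

definition valuation_domain :: "'k::field set \<Rightarrow> bool" where
  "valuation_domain V \<longleftrightarrow> subring V \<and> (\<forall>x. x \<noteq> 0 \<longrightarrow> x \<in> V \<or> inverse x \<in> V)"

definition satisfies_R1 :: "'k::field set \<Rightarrow> bool" where
  "satisfies_R1 A \<longleftrightarrow> (\<forall>P. height_one_prime A P \<longrightarrow> valuation_domain (localization A P))"

definition integral_closure :: "'k::field set \<Rightarrow> 'k set" where
  "integral_closure A = {x. \<exists>p. lead_coeff p = 1 \<and> (\<forall>i. coeff p i \<in> A) \<and> poly p x = 0}"

definition generalized_Krull_domain :: "'k::field set \<Rightarrow> bool" where
  "generalized_Krull_domain A \<longleftrightarrow>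
     A = \<Inter> {localization A P | P. height_one_prime A P} \<and>
     (\<forall>a\<in>A. a \<noteq> 0 \<longrightarrow> finite {P. height_one_prime A P \<and> a \<in> P}) \<and>
     satisfies_R1 A"

end

theory Submission
  imports Defs
begin

lemma ideal_sum:
  assumes "ideal_in A I" "finite S" "\<forall>i\<in>S. f i \<in> I"
  shows "sum f S \<in> I"
  using assms(2,3)
proof (induction S rule: finite_induct)
  case empty then show ?case using assms(1) by (simp add: ideal_in_def)
next
  case (insert x F) then show ?case using assms(1) by (simp add: ideal_in_def)
qed

lemma subring_pow:
  assumes "subring A" "x \<in> A" shows "x ^ n \<in> A"
  using assms by (induction n) (auto simp: subring_def)

lemma ideal_one:
  assumes "ideal_in A I" "subring A" "1 \<in> I" shows "I = A"
proof -
  have "a \<in> I" if "a \<in> A" for a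
    using assms that unfolding ideal_in_def by (metis mult.right_neutral)
  then show ?thesis using assms(1) unfolding ideal_in_def by blast
qed

lemma key:
  fixes R :: "'k::field set"
  assumes sub: "subring R" and N: "ideal_in R N" and sN: "s \<in> N" and s0: "s \<noteq> 0"
    and lc: "lead_coeff p = 1" and cR: "\<forall>i. coeff p i \<in> R" and pz: "poly p (1/s) = 0"
  shows "N = R"
proof -
  define n where "n = degree p"
  have sR: "s \<in> R" using N sN unfolding ideal_in_def by blast
  have "s ^ n * poly p (1/s) = (\<Sum>i\<le>n. coeff p i * (s ^ n * (1/s)^i))"
    by (simp add: poly_altdef n_def sum_distrib_left algebra_simps)
  also have "\<dots> = (\<Sum>i\<le>n. coeff p i * s ^ (n - i))"
  proof (rule sum.cong)
    fix i assume "i \<in> {..n}"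
    then have "s ^ n = s ^ (n - i) * s ^ i" by (simp add: power_add[symmetric])
    then show "coeff p i * (s ^ n * (1/s)^i) = coeff p i * s ^ (n - i)"
      using s0 by (simp add: power_one_over field_simps)
  qed simp
  also have "\<dots> = (\<Sum>i<n. coeff p i * s ^ (n - i)) + 1"
    using lc by (simp add: lessThan_Suc_atMost[symmetric] n_def)
  finally have eq: "(\<Sum>i<n. coeff p i * s ^ (n - i)) + 1 = 0" using pz by simp
  have "(\<Sum>i<n. coeff p i * s ^ (n - i)) \<in> N"
  proof (rule ideal_sum[OF N], simp, intro ballI)
    fix i assume "i \<in> {..<n}"
    then have "coeff p i * s ^ (n - i) = (coeff p i * s ^ (n - i - 1)) * s"
      by (simp add: power_Suc2[symmetric] Suc_diff_Suc)
    moreover have "coeff p i * s ^ (n - i - 1) \<in> R"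
      using sub cR subring_pow[OF sub sR] unfolding subring_def by blast
    ultimately show "coeff p i * s ^ (n - i) \<in> N" using N sN unfolding ideal_in_def by (metis (no_types))
  qed
  moreover have "-1 \<in> R" using sub unfolding subring_def by blast
  ultimately have "(-1) * (\<Sum>i<n. coeff p i * s ^ (n - i)) \<in> N"
    using N unfolding ideal_in_def by blast
  moreover have "(-1) * (\<Sum>i<n. coeff p i * s ^ (n - i)) = 1"
    using eq by (simp add: add_eq_0_iff)
  ultimately show ?thesis using ideal_one[OF N sub] by simp
qed

theorem lemma4p1:
  fixes R :: "'k::field set"
  assumes "subring R"
    and "is_fraction_field_of R"
    and "satisfies_R1 R"
    and "generalized_Krull_domain (integral_closure R)"
    and "\<forall>P. height_one_prime (integral_closure R) P \<longrightarrow> height_one_prime R (P \<inter> R)"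
    and "\<exists>M. maximal_ideal_in R M \<and> (\<forall>P. height_one_prime R P \<longrightarrow> P \<subseteq> M)"
  shows "is_local R"
proof -
  obtain M where M: "maximal_ideal_in R M" and MP: "\<forall>P. height_one_prime R P \<longrightarrow> P \<subseteq> M"
    using assms(6) by blast
  have RR: "R \<subseteq> integral_closure R"
  proof
    fix a assume a: "a \<in> R"
    have "-a \<in> R" using a assms(1) unfolding subring_def by blast
    then have "\<forall>i. coeff [:-a, 1:] i \<in> R" using assms(1)
      by (auto simp: coeff_pCons subring_def split: nat.splits)
    moreover have "lead_coeff [:-a, 1:] = 1" "poly [:-a, 1:] a = 0" by simp_all
    ultimately show "a \<in> integral_closure R" unfolding integral_closure_def by blast
  qed
  have "N = M" if N: "maximal_ideal_in R N" for N
  proof (rule ccontr)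
    assume ne: "N \<noteq> M"
    have "\<not> N \<subseteq> M"
    proof
      assume "N \<subseteq> M"
      then have "M = N \<or> M = R" using N M unfolding maximal_ideal_in_def by blast
      then show False using ne M unfolding maximal_ideal_in_def by blast
    qed
    then obtain s where sN: "s \<in> N" and sM: "s \<notin> M" by blast
    have s0: "s \<noteq> 0" using sM M unfolding maximal_ideal_in_def ideal_in_def by blast
    have "N \<subseteq> R" using N unfolding maximal_ideal_in_def ideal_in_def by (rule conjunct1[OF conjunct1])
    then have sR: "s \<in> R" using sN by (rule subsetD)
    define R' where "R' = integral_closure R"
    have loc: "1/s \<in> localization R' P"
      if hP: "height_one_prime R' P" for P
    proof -
      have "height_one_prime R (P \<inter> R)" using assms(5) hP unfolding R'_def by blast
      then have "P \<inter> R \<subseteq> M" using MP by blast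
      then have sP: "s \<notin> P" using sR sM by blast
      have one: "1 \<in> R'" using RR assms(1) unfolding subring_def R'_def by blast
      have sR': "s \<in> R'" using RR sR unfolding R'_def by blast
      show ?thesis unfolding localization_def
        using one sR' sP by blast
    qed
    have eqR: "R' = \<Inter> {localization R' P | P. height_one_prime R' P}"
      using assms(4) unfolding generalized_Krull_domain_def R'_def by (rule conjunct1)
    have "1/s \<in> \<Inter> {localization R' P | P. height_one_prime R' P}"
    proof (rule InterI)
      fix X assume "X \<in> {localization R' P | P. height_one_prime R' P}"
      then obtain P where "X = localization R' P" "height_one_prime R' P" by blast
      then show "1/s \<in> X" using loc by simp
    qed
    then have "1/s \<in> integral_closure R" using eqR unfolding R'_def by simp
    then obtain p where "lead_coeff p = 1" "\<forall>i. coeff p i \<in> R" "poly p (1/s) = 0"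
      unfolding integral_closure_def by blast
    then have "N = R" using key[OF assms(1) _ sN s0] N unfolding maximal_ideal_in_def by blast
    then show False using N unfolding maximal_ideal_in_def by blast
  qed
  then show ?thesis unfolding is_local_def using M by blast
qed

end
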